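(* There exist constants $c_1,c_2>0$ and an infinite family of graphs $G$ (with $n$ vertices and $m$ edges, $n\to\infty$) such that each $G$ in the family admits a composition-minimal clique cover $\mathcal{C}$ with $c_1 m\le|\mathcal{C}|\le c_2 m$ and $c_1 nm\le\|\mathcal{C}\|\le c_2 nm$, i.e. $|\mathcal{C}|=\Theta(m)$ but $\|\mathcal{C}\|=\Theta(nm)$.
   Context: All graphs are finite, simple, undirected, with no isolated vertices; $n=|V|$, $m=|E|$. A non-edge is an unordered pair of distinct non-adjacent vertices. A clique is a vertex set inducing a complete subgraph. $\|\mathcal{F}\|:=\sum_{F\in\mathcal{F}}|F|$ for a family of finite sets. A clique cover of $G$ is an indexed family $\{C_\ell\}_{\ell\in I}$ of cliques of $G$ such that every edge lies in at least one member; it is composition-minimal if for every two distinct indices $i\ne j$ there exist $u\in C_i$, $v\in C_j$ with $\{u,v\}$ a non-edge. *)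

theory Defs
  imports Complex_Main
begin

definition simple_graph :: "'a set \<Rightarrow> ('a \<Rightarrow> 'a \<Rightarrow> bool) \<Rightarrow> bool" where
  "simple_graph V E \<longleftrightarrow> finite V
     \<and> (\<forall>u v. E u v \<longrightarrow> u \<in> V \<and> v \<in> V)
     \<and> (\<forall>u v. E u v \<longrightarrow> E v u)
     \<and> (\<forall>u. \<not> E u u)
     \<and> (\<forall>v\<in>V. \<exists>u. E v u)"

definition edges :: "('a \<Rightarrow> 'a \<Rightarrow> bool) \<Rightarrow> 'a set set" where
  "edges E = {{u, v} | u v. E u v}"

definition num_edges :: "('a \<Rightarrow> 'a \<Rightarrow> bool) \<Rightarrow> nat" where
  "num_edges E = card (edges E)"

definition non_edge :: "'a set \<Rightarrow> ('a \<Rightarrow> 'a \<Rightarrow> bool) \<Rightarrow> 'a \<Rightarrow> 'a \<Rightarrow> bool" where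
  "non_edge V E u v \<longleftrightarrow> u \<in> V \<and> v \<in> V \<and> u \<noteq> v \<and> \<not> E u v"

definition is_clique :: "'a set \<Rightarrow> ('a \<Rightarrow> 'a \<Rightarrow> bool) \<Rightarrow> 'a set \<Rightarrow> bool" where
  "is_clique V E K \<longleftrightarrow> K \<subseteq> V \<and> (\<forall>u\<in>K. \<forall>v\<in>K. u \<noteq> v \<longrightarrow> E u v)"

definition clique_cover :: "'a set \<Rightarrow> ('a \<Rightarrow> 'a \<Rightarrow> bool) \<Rightarrow> 'i set \<Rightarrow> ('i \<Rightarrow> 'a set) \<Rightarrow> bool" where
  "clique_cover V E I C \<longleftrightarrow> (\<forall>l\<in>I. is_clique V E (C l))
     \<and> (\<forall>u v. E u v \<longrightarrow> (\<exists>l\<in>I. u \<in> C l \<and> v \<in> C l))"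

definition composition_minimal :: "'a set \<Rightarrow> ('a \<Rightarrow> 'a \<Rightarrow> bool) \<Rightarrow> 'i set \<Rightarrow> ('i \<Rightarrow> 'a set) \<Rightarrow> bool" where
  "composition_minimal V E I C \<longleftrightarrow> clique_cover V E I C
     \<and> (\<forall>i\<in>I. \<forall>j\<in>I. i \<noteq> j \<longrightarrow> (\<exists>u\<in>C i. \<exists>v\<in>C j. non_edge V E u v))"

definition total_size :: "'i set \<Rightarrow> ('i \<Rightarrow> 'a set) \<Rightarrow> nat" where
  "total_size I C = (\<Sum>l\<in>I. card (C l))"

end

theory Submission
  imports Defs
begin

definition GE :: "nat \<Rightarrow> nat \<Rightarrow> nat \<Rightarrow> bool" where
  "GE k u v \<longleftrightarrow> u < 3*k \<and> v < 3*k \<and> u \<noteq> v \<and> \<not>(k \<le> u \<and> u < 2*k \<and> k \<le> v \<and> v < 2*k)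
     \<and> \<not>(2*k \<le> u \<and> 2*k \<le> v)"

definition GC :: "nat \<Rightarrow> nat \<Rightarrow> nat set" where
  "GC k l = {0..<k} \<union> {k + l div k, 2*k + l mod k}"

lemma graph_ok:
  assumes k: "k \<ge> 1"
  shows "simple_graph {0..<3*k} (GE k)"
  unfolding simple_graph_def
proof (intro conjI allI impI ballI)
  fix v assume v: "v \<in> {0..<3*k}"
  show "\<exists>u. GE k v u"
  proof (cases "v < k")
    case True then show ?thesis by (rule_tac x="2*k" in exI) (auto simp: GE_def)
  next
    case False then show ?thesis using v by (rule_tac x="0" in exI) (auto simp: GE_def)
  qed
qed (auto simp: GE_def)

lemma cover_ok:
  assumes k: "k \<ge> 1"
  shows "composition_minimal {0..<3*k} (GE k) {0..<k*k} (GC k)"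
  unfolding composition_minimal_def clique_cover_def
proof (intro conjI ballI allI impI)
  fix l assume l: "l \<in> {0..<k*k}"
  then have "l div k < k" by (simp add: less_mult_imp_div_less)
  moreover have "l mod k < k" using k by simp
  ultimately show "is_clique {0..<3*k} (GE k) (GC k l)"
    unfolding is_clique_def GC_def GE_def by auto
next
  fix u v assume e: "GE k u v"
  define a where "a = (if k \<le> u \<and> u < 2*k then u - k else if k \<le> v \<and> v < 2*k then v - k else 0)"
  define b where "b = (if 2*k \<le> u then u - 2*k else if 2*k \<le> v then v - 2*k else 0)"
  have a: "a < k" using e k unfolding a_def GE_def by auto
  have b: "b < k" using e k unfolding b_def GE_def by auto
  have d: "(a*k+b) div k = a" using b by simp
  have m: "(a*k+b) mod k = b" using b by simp
  have lt: "a*k+b < k*k"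
  proof -
    have "a*k + b < a*k + k" using b by simp
    also have "\<dots> = (a+1)*k" by simp
    also have "\<dots> \<le> k*k" using a by (intro mult_le_mono1) simp
    finally show ?thesis .
  qed
  show "\<exists>l\<in>{0..<k*k}. u \<in> GC k l \<and> v \<in> GC k l"
    apply (rule bexI[of _ "a*k+b"])
    using e d m lt unfolding GC_def GE_def a_def b_def by auto
next
  fix i j assume i: "i \<in> {0..<k*k}" and j: "j \<in> {0..<k*k}" and ij: "i \<noteq> j"
  have id: "i div k < k" "j div k < k" using i j by (auto simp: less_mult_imp_div_less)
  have im: "i mod k < k" "j mod k < k" using k by auto
  show "\<exists>u\<in>GC k i. \<exists>v\<in>GC k j. non_edge {0..<3*k} (GE k) u v"
  proof (cases "i div k = j div k")
    case True
    then have "i mod k \<noteq> j mod k" using ij by (metis div_mult_mod_eq)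
    then show ?thesis using id im
      by (rule_tac bexI[of _ "2*k + i mod k"], rule_tac bexI[of _ "2*k + j mod k"])
         (auto simp: GC_def non_edge_def GE_def)
  next
    case False
    then show ?thesis using id im
      by (rule_tac bexI[of _ "k + i div k"], rule_tac bexI[of _ "k + j div k"])
         (auto simp: GC_def non_edge_def GE_def)
  qed
qed

lemma card_GC:
  assumes k: "k \<ge> 1" and l: "l < k*k"
  shows "card (GC k l) = k + 2"
proof -
  have "l div k < k" using l by (simp add: less_mult_imp_div_less)
  have "GC k l = insert (k + l div k) (insert (2*k + l mod k) {0..<k})"
    unfolding GC_def by auto
  moreover have "k + l div k \<notin> insert (2*k + l mod k) {0..<k}"
    using \<open>l div k < k\<close> by auto
  moreover have "2*k + l mod k \<notin> {0..<k}" by auto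
  ultimately show ?thesis by simp
qed

lemma total_ok:
  assumes k: "k \<ge> 1"
  shows "total_size {0..<k*k} (GC k) = k*k*(k+2)"
  unfolding total_size_def using card_GC[OF k] by simp

lemma edges_upper:
  "num_edges (GE k) \<le> 9*k*k"
proof -
  have "edges (GE k) \<subseteq> (\<lambda>(u,v). {u,v}) ` ({0..<3*k} \<times> {0..<3*k})"
    unfolding edges_def GE_def by auto
  then have "card (edges (GE k)) \<le> card ((\<lambda>(u,v). {u,v}) ` ({0..<3*k} \<times> {0..<3*k}))"
    by (intro card_mono) auto
  also have "\<dots> \<le> card ({0..<3*k} \<times> {0..<(3::nat)*k})" by (rule card_image_le) auto
  finally show ?thesis unfolding num_edges_def by (simp add: card_cartesian_product)
qed

lemma edges_lower:
  assumes k: "k \<ge> 1"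
  shows "k*k \<le> num_edges (GE k)"
proof -
  let ?f = "\<lambda>(a,b). {k+a, 2*k+b}"
  have sub: "?f ` ({0..<k} \<times> {0..<k}) \<subseteq> edges (GE k)"
  proof
    fix x assume "x \<in> ?f ` ({0..<k} \<times> {0..<k})"
    then obtain a b where ab: "a < k" "b < k" "x = {k+a, 2*k+b}" by auto
    have "GE k (k+a) (2*k+b)" using ab unfolding GE_def by auto
    then show "x \<in> edges (GE k)" unfolding edges_def using ab by blast
  qed
  have inj: "inj_on ?f ({0..<k} \<times> {0..<k})"
  proof (rule inj_onI, clarsimp)
    fix a b a' b' assume "a < k" "b < k" "a' < k" "b' < k"
      "{k + a, 2 * k + b} = {k + a', 2 * k + b'}"
    then show "a = a' \<and> b = b'" by (auto simp: doubleton_eq_iff)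
  qed
  have fin: "finite (edges (GE k))"
  proof -
    have "edges (GE k) \<subseteq> (\<lambda>(u,v). {u,v}) ` ({0..<3*k} \<times> {0..<3*k})"
      unfolding edges_def GE_def by auto
    then show ?thesis by (rule finite_subset) auto
  qed
  have "k*k = card (?f ` ({0..<k} \<times> {0..<k}))"
    using card_image[OF inj] by (simp add: card_cartesian_product)
  also have "\<dots> \<le> card (edges (GE k))" by (rule card_mono[OF fin sub])
  finally show ?thesis unfolding num_edges_def .
qed

theorem mainTheorem9:
  shows "\<exists>c1 c2 :: real. c1 > 0 \<and> c2 > 0 \<and>
    (\<forall>N :: nat. \<exists>(V :: nat set) (E :: nat \<Rightarrow> nat \<Rightarrow> bool) (I :: nat set) (C :: nat \<Rightarrow> nat set).
       simple_graph V E \<and> card V \<ge> N \<and> composition_minimal V E I C \<and>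
       c1 * real (num_edges E) \<le> real (card I) \<and> real (card I) \<le> c2 * real (num_edges E) \<and>
       c1 * real (card V) * real (num_edges E) \<le> real (total_size I C) \<and>
       real (total_size I C) \<le> c2 * real (card V) * real (num_edges E))"
proof (rule exI[of _ "1/27::real"], rule exI[of _ "1::real"], intro conjI allI)
  show "(0::real) < 1/27" by simp
  show "(0::real) < 1" by simp
next
  fix N :: nat
  define k where "k = N + 1"
  have k: "k \<ge> 1" unfolding k_def by simp
  define m where "m = num_edges (GE k)"
  have mu: "real m \<le> 9 * real k * real k" using edges_upper[of k] unfolding m_def
    by (metis of_nat_le_iff of_nat_mult of_nat_numeral)
  have ml: "real k * real k \<le> real m" using edges_lower[OF k] unfolding m_def
    by (metis of_nat_le_iff of_nat_mult)
  have kr: "real k \<ge> 1" using k by simp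
  have tot: "real (total_size {0..<k*k} (GC k)) = real k * real k * (real k + 2)"
    using total_ok[OF k] by (simp only: of_nat_mult of_nat_add of_nat_numeral)
  show "\<exists>(V :: nat set) (E :: nat \<Rightarrow> nat \<Rightarrow> bool) (I :: nat set) (C :: nat \<Rightarrow> nat set).
       simple_graph V E \<and> card V \<ge> N \<and> composition_minimal V E I C \<and>
       1/27 * real (num_edges E) \<le> real (card I) \<and> real (card I) \<le> 1 * real (num_edges E) \<and>
       1/27 * real (card V) * real (num_edges E) \<le> real (total_size I C) \<and>
       real (total_size I C) \<le> 1 * real (card V) * real (num_edges E)"
  proof (intro exI conjI)
    show "simple_graph {0..<3*k} (GE k)" by (rule graph_ok[OF k])
    show "N \<le> card {0..<3*k}" unfolding k_def by simp
    show "composition_minimal {0..<3*k} (GE k) {0..<k*k} (GC k)" by (rule cover_ok[OF k])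
    show "1/27 * real (num_edges (GE k)) \<le> real (card {0..<k*k})"
      using mu unfolding m_def by simp
    show "real (card {0..<k*k}) \<le> 1 * real (num_edges (GE k))"
      using ml unfolding m_def by simp
    have k0: "real k \<ge> 0" by simp
    have "1/27 * (3 * real k) * real m \<le> 1/27 * (3 * real k) * (9 * real k * real k)"
      using mu k0 by (intro mult_left_mono) auto
    also have "\<dots> \<le> real k * real k * (real k + 2)" using k0
      by (simp add: algebra_simps)
    finally show "1/27 * real (card {0..<3*k}) * real (num_edges (GE k)) \<le> real (total_size {0..<k*k} (GC k))"
      using tot unfolding m_def by simp
    have "real k * real k * (real k + 2) \<le> (3 * real k) * (real k * real k)"
      using kr by (simp add: algebra_simps)
    also have "\<dots> \<le> (3 * real k) * real m" using ml k0 by (intro mult_left_mono) auto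
    finally show "real (total_size {0..<k*k} (GC k)) \<le> 1 * real (card {0..<3*k}) * real (num_edges (GE k))"
      using tot unfolding m_def by simp
  qed
qed

end
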